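(* Let $\alpha$ be an equidistributed infinite permutation with $p_{\alpha}(n)=n$ for all $n\ge1$. Then the underlying word $s$ of $\alpha$ is aperiodic (not ultimately periodic).
   Context: An infinite permutation is an equivalence class of sequences of pairwise distinct reals under $a\sim b\iff(a[i]<a[j]\Leftrightarrow b[i]<b[j]\ \forall i,j)$; write $\alpha=(\alpha[n])_{n\ge0}$ with the induced order. $p_\alpha(n)$ is the number of distinct factors $\alpha[i..i+n-1]$ of length $n$, each regarded as a finite permutation (relative order). A sequence $(a[n])$ in $[0,1]$ is equidistributed if $\lim_{n\to\infty}\frac{\#\{0\le i<n:a[i]<t\}}{n}=t$ for each $t\in[0,1]$; a permutation is equidistributed if it has an equidistributed representative in $[0,1]$. The underlying word of $\alpha$ is the infinite binary word $s$ with $s[i]=0$ if $\alpha[i]<\alpha[i+1]$ and $s[i]=1$ otherwise. An infinite word is ultimately periodic if it equals $vwww\cdots$ for finite words $v,w$ with $w$ nonempty. *)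

theory Defs
  imports Complex_Main
begin

text \<open>An infinite permutation is represented by any representative sequence
  of pairwise distinct reals; all notions below depend only on the order type.\<close>

definition order_equiv :: "(nat \<Rightarrow> real) \<Rightarrow> (nat \<Rightarrow> real) \<Rightarrow> bool" where
  "order_equiv a b \<longleftrightarrow> (\<forall>i j. a i < a j \<longleftrightarrow> b i < b j)"

definition equidistributed_seq :: "(nat \<Rightarrow> real) \<Rightarrow> bool" where
  "equidistributed_seq b \<longleftrightarrow> (\<forall>n. b n \<in> {0..1}) \<and>
     (\<forall>t\<in>{0..1}. (\<lambda>n. real (card {i. i < n \<and> b i < t}) / real n) \<longlonglongrightarrow> t)"

definition equidistributed_perm :: "(nat \<Rightarrow> real) \<Rightarrow> bool" where
  "equidistributed_perm a \<longleftrightarrow> (\<exists>b. inj b \<and> order_equiv a b \<and> equidistributed_seq b)"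

text \<open>The factor of length n starting at i, as a finite permutation (relative order pattern
  on positions 0..n-1).\<close>
definition perm_factor :: "(nat \<Rightarrow> real) \<Rightarrow> nat \<Rightarrow> nat \<Rightarrow> (nat \<Rightarrow> nat \<Rightarrow> bool)" where
  "perm_factor a i n = (\<lambda>j k. j < n \<and> k < n \<and> a (i + j) < a (i + k))"

definition perm_complexity :: "(nat \<Rightarrow> real) \<Rightarrow> nat \<Rightarrow> nat" where
  "perm_complexity a n = card {perm_factor a i n | i. True}"

definition underlying_word :: "(nat \<Rightarrow> real) \<Rightarrow> nat \<Rightarrow> nat" where
  "underlying_word a i = (if a i < a (Suc i) then 0 else 1)"

definition ultimately_periodic :: "(nat \<Rightarrow> 'a) \<Rightarrow> bool" where
  "ultimately_periodic s \<longleftrightarrow> (\<exists>N p. p > 0 \<and> (\<forall>i\<ge>N. s (i + p) = s i))"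

end

theory Submission
  imports Defs
begin

lemma eq_no_mono_ap:
  fixes b :: "nat \<Rightarrow> real" and c D :: nat
  assumes eq: "equidistributed_seq b" and D: "D > 0"
    and mono: "(\<forall>l. b (c + l*D) < b (c + Suc l * D)) \<or> (\<forall>l. b (c + Suc l * D) < b (c + l*D))"
  shows False
proof -
  define x where "x l = b (c + l*D)" for l
  have b01: "\<And>n. b n \<in> {0..1}" using eq unfolding equidistributed_seq_def by auto
  have lim: "\<And>t. t \<in> {0..1} \<Longrightarrow> (\<lambda>n. real (card {i. i < n \<and> b i < t}) / real n) \<longlonglongrightarrow> t"
    using eq unfolding equidistributed_seq_def by auto
  have x0: "\<And>l. 0 \<le> x l" and x1: "\<And>l. x l \<le> 1" using b01 by (auto simp: x_def)
  have mono': "(\<forall>l. x l < x (Suc l)) \<or> (\<forall>l. x (Suc l) < x l)" using mono by (simp add: x_def)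
  have xlt1: "x l < 1" if hl: "l \<ge> 1" for l
  proof -
    obtain k where k: "l = Suc k" using hl by (cases l) auto
    show ?thesis using mono' x1[of "Suc (Suc k)"] x1[of k] k by (metis order_less_le_trans)
  qed
  obtain L where L: "x \<longlonglongrightarrow> L"
  proof (cases "\<forall>l. x l < x (Suc l)")
    case True
    then have "incseq x" by (intro incseq_SucI) (simp add: less_imp_le)
    then show ?thesis using incseq_convergent[of x 1] x1 that by blast
  next
    case False
    then have "\<forall>l. x (Suc l) < x l" using mono' by blast
    then have "decseq x" by (intro decseq_SucI) (simp add: less_imp_le)
    then show ?thesis using decseq_convergent[of x 0] x0 that by blast
  qed
  have L0: "0 \<le> L" using LIMSEQ_le_const[OF L] x0 by blast
  have L1: "L \<le> 1" using LIMSEQ_le_const2[OF L] x1 by blast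
  define \<epsilon> where "\<epsilon> = 1 / (4 * real D)"
  have \<epsilon>pos: "\<epsilon> > 0" using D by (simp add: \<epsilon>_def)
  obtain l0 where l0: "\<forall>l\<ge>l0. norm (x l - L) < \<epsilon>" using L \<epsilon>pos unfolding LIMSEQ_iff by blast
  define l1 where "l1 = Suc l0"
  define t0 where "t0 = max 0 (L - \<epsilon>)"
  define t1 where "t1 = min 1 (L + \<epsilon>)"
  have t0r: "t0 \<in> {0..1}" and t1r: "t1 \<in> {0..1}" using L0 L1 \<epsilon>pos by (auto simp: t0_def t1_def)
  have t01: "t0 \<le> t1" using L0 L1 \<epsilon>pos by (auto simp: t0_def t1_def)
  have tdiff: "t1 - t0 \<le> 2 * \<epsilon>" by (auto simp: t0_def t1_def)
  have inwin: "t0 \<le> x l \<and> x l < t1" if "l \<ge> l1" for l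
  proof -
    have "norm (x l - L) < \<epsilon>" using l0 that by (auto simp: l1_def)
    moreover have "x l < 1" using xlt1[of l] that by (auto simp: l1_def)
    ultimately show ?thesis using x0[of l] by (auto simp: t0_def t1_def)
  qed
  define u where "u n = real (card {i. i < n \<and> b i < t1}) / real n - real (card {i. i < n \<and> b i < t0}) / real n" for n
  have ulim: "u \<longlonglongrightarrow> t1 - t0" unfolding u_def by (intro tendsto_diff lim t0r t1r)
  have \<delta>: "1 / (4 * real D) > 0" using D by simp
  obtain M where M: "\<forall>n\<ge>M. norm (u n - (t1 - t0)) < 1 / (4 * real D)"
    using ulim \<delta> unfolding LIMSEQ_iff by blast
  define m where "m = 3 * (c + l1 * D) + M"
  define n where "n = c + (l1 + m) * D"
  have Dge: "D \<ge> 1" using D by simp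
  have mn: "m \<le> n"
  proof -
    have "m \<le> m * D" using Dge by simp
    also have "\<dots> \<le> (l1 + m) * D" by simp
    also have "\<dots> \<le> n" by (simp add: n_def)
    finally show ?thesis .
  qed
  have nM: "n \<ge> M" using mn by (simp add: m_def)
  have upper: "u n < 3 / (4 * real D)"
  proof -
    have "norm (u n - (t1 - t0)) < 1 / (4 * real D)" using M nM by blast
    moreover have "t1 - t0 \<le> 2 / (4 * real D)" using tdiff by (simp add: \<epsilon>_def)
    ultimately have "u n < 2 / (4 * real D) + 1 / (4 * real D)" by (simp add: abs_less_iff)
    also have "2 / (4 * real D) + 1 / (4 * real D) = 3 / (4 * real D)" by (simp add: add_divide_distrib[symmetric])
    finally show ?thesis .
  qed
  have sub: "(\<lambda>l. c + l * D) ` {l1..<l1+m} \<subseteq> {i. i < n \<and> t0 \<le> b i \<and> b i < t1}"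
  proof
    fix i assume "i \<in> (\<lambda>l. c + l * D) ` {l1..<l1+m}"
    then obtain l where l: "l \<in> {l1..<l1+m}" "i = c + l * D" by blast
    have "i < n" using l D by (simp add: n_def)
    moreover have "t0 \<le> b i \<and> b i < t1" using inwin[of l] l by (simp add: x_def)
    ultimately show "i \<in> {i. i < n \<and> t0 \<le> b i \<and> b i < t1}" by simp
  qed
  have cardap: "card ((\<lambda>l. c + l * D) ` {l1..<l1+m}) = m"
    using D by (subst card_image) (auto simp: inj_on_def)
  have cm: "m \<le> card {i. i < n \<and> t0 \<le> b i \<and> b i < t1}"
    using card_mono[OF _ sub] cardap by simp
  have split: "{i. i < n \<and> b i < t1} = {i. i < n \<and> b i < t0} \<union> {i. i < n \<and> t0 \<le> b i \<and> b i < t1}"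
    using t01 by auto
  have cu: "card {i. i < n \<and> b i < t1} = card {i. i < n \<and> b i < t0} + card {i. i < n \<and> t0 \<le> b i \<and> b i < t1}"
    unfolding split by (rule card_Un_disjoint) auto
  have npos: "n > 0" using D by (simp add: n_def l1_def)
  have "u n = real (card {i. i < n \<and> t0 \<le> b i \<and> b i < t1}) / real n"
    unfolding u_def cu by (simp add: diff_divide_distrib[symmetric])
  also have "\<dots> \<ge> real m / real n" using cm npos by (simp add: divide_right_mono)
  finally have lower: "real m / real n \<le> u n" .
  have key: "3 * real n \<le> 4 * real D * real m"
  proof -
    have "3 * n = 3 * c + 3 * l1 * D + 3 * m * D" by (simp add: n_def algebra_simps)
    also have "\<dots> \<le> m * D + 3 * m * D"
    proof -
      have "3 * c + 3 * l1 * D \<le> m" by (simp add: m_def)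
      also have "m \<le> m * D" using Dge by simp
      finally show ?thesis by (simp add: mult.commute)
    qed
    finally have "3 * n \<le> 4 * D * m" by (simp add: algebra_simps)
    then show ?thesis by (metis (mono_tags) of_nat_le_iff of_nat_mult of_nat_numeral)
  qed
  have "3 / (4 * real D) \<le> real m / real n"
  proof -
    have p1: "real n > 0" using npos by simp
    have p2: "real D > 0" using D by simp
    show ?thesis using key p1 p2 by (simp add: field_simps)
  qed
  then show False using lower upper by linarith
qed

lemma up_down:
  fixes b :: "nat \<Rightarrow> real"
  assumes eq: "equidistributed_seq b" and ib: "inj b" and D: "D > 0"
  shows "\<exists>l. b (c + l*D) < b (c + Suc l * D)" and "\<exists>l. b (c + Suc l * D) < b (c + l*D)"
proof -
  have ne: "b (c + l*D) \<noteq> b (c + Suc l * D)" for l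
    using ib D by (auto dest: injD)
  show "\<exists>l. b (c + l*D) < b (c + Suc l * D)"
  proof (rule ccontr)
    assume "\<not> ?thesis"
    then have "\<forall>l. b (c + Suc l * D) < b (c + l*D)" using ne by (meson linorder_neqE_linordered_idom)
    then show False using eq_no_mono_ap[OF eq D] by blast
  qed
  show "\<exists>l. b (c + Suc l * D) < b (c + l*D)"
  proof (rule ccontr)
    assume "\<not> ?thesis"
    then have "\<forall>l. b (c + l*D) < b (c + Suc l * D)" using ne by (meson linorder_neqE_linordered_idom)
    then show False using eq_no_mono_ap[OF eq D] by blast
  qed
qed

lemma per_k:
  fixes s :: "nat \<Rightarrow> 'a"
  assumes N: "\<forall>i\<ge>N. s (i+t) = s i" and i: "i \<ge> N"
  shows "s (i + k*t) = s i"
proof (induction k)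
  case 0 then show ?case by simp
next
  case (Suc k)
  have "s (i + Suc k * t) = s ((i + k*t) + t)" by (simp add: algebra_simps)
  also have "\<dots> = s (i + k*t)" using N i by simp
  finally show ?case using Suc by simp
qed

lemma per_mod:
  fixes s :: "nat \<Rightarrow> 'a"
  assumes N: "\<forall>i\<ge>N. s (i+t) = s i" and i: "i \<ge> N"
  shows "s (i + x) = s (i + x mod t)"
proof -
  have e: "i + x = (i + x mod t) + (x div t) * t" by simp
  have "s (i + x) = s ((i + x mod t) + (x div t) * t)" by (subst e) (rule refl)
  also have "\<dots> = s (i + x mod t)" using i by (intro per_k[OF N]) simp
  finally show ?thesis .
qed

lemma minper_lt:
  fixes s :: "nat \<Rightarrow> 'a"
  assumes N: "\<forall>i\<ge>N. s (i+t) = s i" and tpos: "t > 0"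
    and minimal: "\<And>d. 0 < d \<Longrightarrow> d < t \<Longrightarrow> \<not> (\<exists>N. \<forall>i\<ge>N. s (i+d) = s i)"
    and r: "r < r'" "r' < t" and same: "\<forall>x<t. s (N+r+x) = s (N+r'+x)"
  shows False
proof -
  define d where "d = r' - r"
  have d: "0 < d" "d < t" using r by (auto simp: d_def)
  have "\<forall>i\<ge>N + r. s (i+d) = s i"
  proof (intro allI impI)
    fix i assume i: "i \<ge> N + r"
    define y where "y = i - (N + r)"
    have iy: "i = N + r + y" using i by (simp add: y_def)
    have e: "i + d = N + r' + y" using r by (simp add: iy d_def)
    have "s (i + d) = s (N + r' + y)" by (subst e) (rule refl)
    also have "\<dots> = s (N + r' + y mod t)" using per_mod[OF N, of "N + r'" y] by simp
    also have "\<dots> = s (N + r + y mod t)" using same tpos by simp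
    also have "\<dots> = s i" using per_mod[OF N, of "N + r" y] by (simp add: iy)
    finally show "s (i + d) = s i" .
  qed
  then show False using minimal[OF d] by blast
qed

theorem proposition6:
  fixes a :: "nat \<Rightarrow> real"
  assumes "inj a"
    and "equidistributed_perm a"
    and "\<And>n. n \<ge> 1 \<Longrightarrow> perm_complexity a n = n"
  shows "\<not> ultimately_periodic (underlying_word a)"
proof
  assume upd: "ultimately_periodic (underlying_word a)"
  obtain b where ib: "inj b" and oe: "order_equiv a b" and eq: "equidistributed_seq b"
    using assms(2) unfolding equidistributed_perm_def by blast
  have pf: "perm_factor a = perm_factor b"
    using oe unfolding order_equiv_def by (intro ext) (simp add: perm_factor_def)
  have uw: "underlying_word a = underlying_word b"
    using oe unfolding order_equiv_def by (intro ext) (simp add: underlying_word_def)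
  define s where "s = underlying_word b"
  define P where "P d \<longleftrightarrow> d > 0 \<and> (\<exists>N. \<forall>i\<ge>N. s (i+d) = s i)" for d
  have exP: "\<exists>d. P d" using upd unfolding ultimately_periodic_def P_def s_def uw by blast
  define t where "t = (LEAST d. P d)"
  have Pt: "P t" unfolding t_def using exP by (rule LeastI_ex)
  then have tpos: "t > 0" unfolding P_def by blast
  obtain N where N: "\<forall>i\<ge>N. s (i+t) = s i" using Pt unfolding P_def by blast
  have minimal: "\<not> (\<exists>N. \<forall>i\<ge>N. s (i+d) = s i)" if "0 < d" "d < t" for d
  proof -
    have "d < (LEAST d. P d)" using that by (simp add: t_def)
    then have "\<not> P d" by (rule not_less_Least)
    then show ?thesis using that unfolding P_def by blast
  qed
  have "\<forall>r. \<exists>l. b (N + r + l*t) < b (N + r + Suc l * t)"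
    using up_down(1)[OF eq ib tpos] by blast
  from choice[OF this] obtain lu where lu: "\<And>r. b (N + r + lu r * t) < b (N + r + Suc (lu r) * t)" by blast
  have "\<forall>r. \<exists>l. b (N + r + Suc l * t) < b (N + r + l*t)"
    using up_down(2)[OF eq ib tpos] by blast
  from choice[OF this] obtain ld where ld: "\<And>r. b (N + r + Suc (ld r) * t) < b (N + r + ld r * t)" by blast
  define pos where "pos r e = (if e then N + r + lu r * t else N + r + ld r * t)" for r e
  have pos_t: "b (pos r e) < b (pos r e + t) \<longleftrightarrow> e" for r e
    using lu[of r] ld[of r] by (auto simp: pos_def add_ac)
  have pos_s: "s (pos r e + x) = s (N + r + x)" for r e x
  proof -
    have e: "pos r e + x = (N + r + x) + (if e then lu r else ld r) * t" by (simp add: pos_def)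
    show ?thesis by (subst e) (rule per_k[OF N], simp)
  qed
  show False
  proof (cases "t = 1")
    case True
    have "s (pos 0 True) = s (pos 0 False)" using pos_s[of 0 True 0] pos_s[of 0 False 0] by simp
    moreover have "s (pos 0 True) = 0" using pos_t[of 0 True] True by (simp add: s_def underlying_word_def)
    moreover have "s (pos 0 False) = 1" using pos_t[of 0 False] True by (simp add: s_def underlying_word_def)
    ultimately show False by simp
  next
    case False
    then have t2: "t \<ge> 2" using tpos by simp
    define g where "g = (\<lambda>(r, e). perm_factor b (pos r e) (t+1))"
    define A where "A = {0..<t} \<times> (UNIV :: bool set)"
    have cardF: "card {perm_factor b i (t+1) | i. True} = t + 1"
      using assms(3)[of "t+1"] unfolding perm_complexity_def pf by simp
    then have finF: "finite {perm_factor b i (t+1) | i. True}" by (intro card_ge_0_finite) simp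
    have sub: "g ` A \<subseteq> {perm_factor b i (t+1) | i. True}" unfolding g_def by auto
    have word: "s (p + x) = (if perm_factor b p (t+1) x (Suc x) then 0 else 1)" if "x < t" for p x
      using that by (simp add: s_def underlying_word_def perm_factor_def)
    have inj: "inj_on g A"
    proof (rule inj_onI)
      fix u v assume u: "u \<in> A" and v: "v \<in> A" and guv: "g u = g v"
      obtain r e where ru: "u = (r, e)" by (cases u)
      obtain r' e' where rv: "v = (r', e')" by (cases v)
      have rt: "r < t" "r' < t" using u v ru rv by (auto simp: A_def)
      have gg: "perm_factor b (pos r e) (t+1) = perm_factor b (pos r' e') (t+1)"
        using guv ru rv by (simp add: g_def)
      have same: "\<forall>x<t. s (N+r+x) = s (N+r'+x)"
      proof (intro allI impI)
        fix x assume x: "x < t"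
        have "s (N+r+x) = s (pos r e + x)" using pos_s by simp
        also have "\<dots> = s (pos r' e' + x)" using word[OF x, of "pos r e"] word[OF x, of "pos r' e'"] gg by simp
        also have "\<dots> = s (N+r'+x)" using pos_s by simp
        finally show "s (N+r+x) = s (N+r'+x)" .
      qed
      have rr: "r = r'"
      proof (rule ccontr)
        assume "r \<noteq> r'"
        then consider "r < r'" | "r' < r" by linarith
        then show False
        proof cases
          case 1 then show False using minper_lt[OF N tpos minimal 1 rt(2) same] by blast
        next
          case 2
          have same': "\<forall>x<t. s (N+r'+x) = s (N+r+x)" using same by simp
          show False using minper_lt[OF N tpos minimal 2 rt(1) same'] by blast
        qed
      qed
      have "perm_factor b (pos r e) (t+1) 0 t = perm_factor b (pos r' e') (t+1) 0 t" using gg by simp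
      then have "e = e'" using pos_t[of r e] pos_t[of r' e'] tpos by (simp add: perm_factor_def)
      then show "u = v" using ru rv rr by simp
    qed
    have "card A = 2 * t" by (simp add: A_def card_cartesian_product)
    then have "card (g ` A) = 2 * t" using card_image[OF inj] by simp
    moreover have "card (g ` A) \<le> t + 1" using card_mono[OF finF sub] cardF by simp
    ultimately show False using t2 by simp
  qed
qed

end
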